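(* Let $X\subset\mathbb{R}^n$ be a closed unbounded subset which is Lipschitz regular at infinity. Then there exists a compact set $K\subset\mathbb{R}^n$ such that each connected component of $X\setminus K$ is Lipschitz normally embedded.
   Context: All subsets carry the Euclidean induced metric. A map is bi-Lipschitz if it is Lipschitz (i.e. $\|f(x_1)-f(x_2)\|\le\lambda\|x_1-x_2\|$ for some $\lambda>0$) with Lipschitz inverse. $X\subset\mathbb{R}^n$ is Lipschitz regular at infinity if there exist compact sets $K_1\subset\mathbb{R}^k$, $K_2\subset\mathbb{R}^n$ (some $k\in\mathbb{N}$) and a bi-Lipschitz homeomorphism $\mathbb{R}^k\setminus K_1\to X\setminus K_2$. For a path connected $Z\subset\mathbb{R}^n$, the inner distance $d_Z(x_1,x_2)$ is the infimum of the lengths of paths in $Z$ joining $x_1$ to $x_2$. A set $Z\subset\mathbb{R}^n$ is Lipschitz normally embedded if there is $\lambda>0$ with $d_Z(x_1,x_2)\le\lambda\|x_1-x_2\|$ for all $x_1,x_2\in Z$. *)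

theory Defs
  imports "HOL-Analysis.Analysis"
begin

text \<open>Euclidean distance on the model of R^k used by the library topology
  Euclidean_space k, whose carrier is the set of x :: nat => real with x i = 0 for i >= k.\<close>
definition eucl_dist :: "nat \<Rightarrow> (nat \<Rightarrow> real) \<Rightarrow> (nat \<Rightarrow> real) \<Rightarrow> real" where
  "eucl_dist k x y = L2_set (\<lambda>i. x i - y i) {..<k}"

definition lipschitz_regular_at_infinity :: "'a::euclidean_space set \<Rightarrow> bool" where
  "lipschitz_regular_at_infinity X \<longleftrightarrow>
    (\<exists>k K1 K2 f g L1 L2.
       compactin (Euclidean_space k) K1 \<and> compact K2 \<and> L1 > 0 \<and> L2 > 0 \<and>
       f ` (topspace (Euclidean_space k) - K1) = X - K2 \<and>
       g ` (X - K2) = topspace (Euclidean_space k) - K1 \<and>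
       (\<forall>x\<in>topspace (Euclidean_space k) - K1. g (f x) = x) \<and>
       (\<forall>y\<in>X - K2. f (g y) = y) \<and>
       (\<forall>x\<in>topspace (Euclidean_space k) - K1. \<forall>x'\<in>topspace (Euclidean_space k) - K1.
          dist (f x) (f x') \<le> L1 * eucl_dist k x x') \<and>
       (\<forall>y\<in>X - K2. \<forall>y'\<in>X - K2. eucl_dist k (g y) (g y') \<le> L2 * dist y y'))"

definition path_length :: "(real \<Rightarrow> 'a::real_normed_vector) \<Rightarrow> ereal" where
  "path_length \<gamma> =
    (SUP (m, t) \<in> {(m, t). t 0 = (0::real) \<and> t m = 1 \<and> (\<forall>i<m. t i \<le> t (Suc i))}.
       ereal (\<Sum>i<m. dist (\<gamma> (t (Suc i))) (\<gamma> (t i))))"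

definition inner_dist :: "'a::real_normed_vector set \<Rightarrow> 'a \<Rightarrow> 'a \<Rightarrow> ereal" where
  "inner_dist Z x y =
    (INF \<gamma> \<in> {\<gamma>. path \<gamma> \<and> path_image \<gamma> \<subseteq> Z \<and> pathstart \<gamma> = x \<and> pathfinish \<gamma> = y}.
       path_length \<gamma>)"

definition LNE :: "'a::real_normed_vector set \<Rightarrow> bool" where
  "LNE Z \<longleftrightarrow> (\<exists>c>0. \<forall>x1\<in>Z. \<forall>x2\<in>Z. inner_dist Z x1 x2 \<le> ereal (c * norm (x1 - x2)))"

end

theory Submission imports Defs begin

lemma path_length_le:
  fixes \<gamma> :: "real \<Rightarrow> 'a::real_normed_vector"
  assumes M: "M \<ge> 0" and L: "\<And>s t. s \<in> {0..1} \<Longrightarrow> t \<in> {0..1} \<Longrightarrow> dist (\<gamma> s) (\<gamma> t) \<le> M * \<bar>s - t\<bar>"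
  shows "path_length \<gamma> \<le> ereal M"
  unfolding path_length_def
proof (rule SUP_least, clarify)
  fix m and t :: "nat \<Rightarrow> real"
  assume t0: "t 0 = 0" and tm: "t m = 1" and mono: "\<forall>i<m. t i \<le> t (Suc i)"
  have up: "t i \<le> t j" if "i \<le> j" "j \<le> m" for i j
    using that
  proof (induction j)
    case 0 then show ?case by simp
  next
    case (Suc j)
    show ?case
    proof (cases "i = Suc j")
      case True then show ?thesis by simp
    next
      case False
      then have ij: "i \<le> j" using Suc.prems(1) by simp
      have jm: "j < m" using Suc.prems(2) by simp
      have "t i \<le> t j" using Suc.IH ij jm by simp
      moreover have "t j \<le> t (Suc j)" using mono jm by simp
      ultimately show ?thesis by linarith
    qed
  qed
  have inI: "t i \<in> {0..1}" if "i \<le> m" for i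
    using up[of 0 i] up[of i m] that t0 tm by auto
  have "(\<Sum>i<m. dist (\<gamma> (t (Suc i))) (\<gamma> (t i))) \<le> (\<Sum>i<m. M * (t (Suc i) - t i))"
  proof (rule sum_mono)
    fix i assume "i \<in> {..<m}"
    then have "i < m" by simp
    then have "dist (\<gamma> (t (Suc i))) (\<gamma> (t i)) \<le> M * \<bar>t (Suc i) - t i\<bar>"
      using L inI by simp
    then show "dist (\<gamma> (t (Suc i))) (\<gamma> (t i)) \<le> M * (t (Suc i) - t i)"
      using mono \<open>i < m\<close> by simp
  qed
  also have "\<dots> = M * (\<Sum>i<m. (t (Suc i) - t i))" by (simp add: sum_distrib_left)
  also have "\<dots> = M" by (simp add: sum_lessThan_telescope t0 tm)
  finally show "ereal (\<Sum>i<m. dist (\<gamma> (t (Suc i))) (\<gamma> (t i))) \<le> ereal M" by simp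
qed

lemma path_of_lip:
  fixes \<gamma> :: "real \<Rightarrow> 'a::real_normed_vector"
  assumes M: "M \<ge> 0" and L: "\<And>s t. s \<in> {0..1} \<Longrightarrow> t \<in> {0..1} \<Longrightarrow> dist (\<gamma> s) (\<gamma> t) \<le> M * \<bar>s - t\<bar>"
  shows "path \<gamma>"
  unfolding path_def
  by (rule lipschitz_on_continuous_on[of M]) (auto simp: lipschitz_on_def M dist_real_def L)

lemma lip_glue:
  fixes h :: "real \<Rightarrow> 'a::metric_space"
  assumes ab: "a \<le> b" and bc: "b \<le> c"
    and L1: "\<And>s t. s \<in> {a..b} \<Longrightarrow> t \<in> {a..b} \<Longrightarrow> dist (h s) (h t) \<le> M * \<bar>s - t\<bar>"
    and L2: "\<And>s t. s \<in> {b..c} \<Longrightarrow> t \<in> {b..c} \<Longrightarrow> dist (h s) (h t) \<le> M * \<bar>s - t\<bar>"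
  shows "\<And>s t. s \<in> {a..c} \<Longrightarrow> t \<in> {a..c} \<Longrightarrow> dist (h s) (h t) \<le> M * \<bar>s - t\<bar>"
proof -
  have key: "dist (h s) (h t) \<le> M * \<bar>s - t\<bar>" if st: "s \<in> {a..b}" "t \<in> {b..c}" for s t
  proof -
    have bb1: "b \<in> {a..b}" using ab by simp
    have bb2: "b \<in> {b..c}" using bc by simp
    have e1: "dist (h s) (h b) \<le> M * \<bar>s - b\<bar>" by (rule L1[OF st(1) bb1])
    have e2: "dist (h b) (h t) \<le> M * \<bar>b - t\<bar>" by (rule L2[OF bb2 st(2)])
    have "dist (h s) (h t) \<le> dist (h s) (h b) + dist (h b) (h t)" by (rule dist_triangle)
    also have "\<dots> \<le> M * \<bar>s - b\<bar> + M * \<bar>b - t\<bar>" using e1 e2 by (rule add_mono)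
    also have "\<bar>s - b\<bar> = b - s" using st by simp
    also have "\<bar>b - t\<bar> = t - b" using st by simp
    also have "M * (b - s) + M * (t - b) = M * \<bar>s - t\<bar>"
    proof -
      have "\<bar>s - t\<bar> = t - s" using st by simp
      then show ?thesis by (simp add: algebra_simps)
    qed
    finally show ?thesis .
  qed
  fix s t assume s: "s \<in> {a..c}" and t: "t \<in> {a..c}"
  show "dist (h s) (h t) \<le> M * \<bar>s - t\<bar>"
  proof (cases "s \<le> b")
    case True
    show ?thesis
    proof (cases "t \<le> b")
      case T2: True
      have "s \<in> {a..b}" "t \<in> {a..b}" using True T2 s t by auto
      then show ?thesis by (rule L1)
    next
      case F2: False
      have "s \<in> {a..b}" "t \<in> {b..c}" using True F2 s t by auto
      then show ?thesis by (rule key)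
    qed
  next
    case False
    show ?thesis
    proof (cases "t \<le> b")
      case T2: True
      have "t \<in> {a..b}" "s \<in> {b..c}" using False T2 s t by auto
      then have "dist (h t) (h s) \<le> M * \<bar>t - s\<bar>" by (rule key)
      then show ?thesis by (simp add: dist_commute abs_minus_commute)
    next
      case F2: False
      have "s \<in> {b..c}" "t \<in> {b..c}" using False F2 s t by auto
      then show ?thesis by (rule L2)
    qed
  qed
qed

definition lin :: "(nat \<Rightarrow> real) \<Rightarrow> (nat \<Rightarrow> real) \<Rightarrow> real \<Rightarrow> nat \<Rightarrow> real" where
  "lin u v s = (\<lambda>l. u l + s * (v l - u l))"

lemma eucl_lin: "eucl_dist k (lin u v s) (lin u v t) = \<bar>s - t\<bar> * eucl_dist k u v"
proof -
  have e: "(\<lambda>l. lin u v s l - lin u v t l) = (\<lambda>l. (s - t) * (v l - u l))"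
    by (rule ext) (simp add: lin_def algebra_simps)
  have "eucl_dist k (lin u v s) (lin u v t) = sqrt (\<Sum>l<k. ((s - t) * (v l - u l))\<^sup>2)"
    unfolding eucl_dist_def L2_set_def e ..
  also have "\<dots> = sqrt ((s - t)\<^sup>2 * (\<Sum>l<k. (u l - v l)\<^sup>2))"
    by (simp add: power_mult_distrib sum_distrib_left power2_commute)
  also have "\<dots> = \<bar>s - t\<bar> * eucl_dist k u v"
    unfolding eucl_dist_def L2_set_def by (simp add: real_sqrt_mult)
  finally show ?thesis .
qed

lemma eucl_triangle: "eucl_dist k x z \<le> eucl_dist k x y + eucl_dist k y z"
  unfolding eucl_dist_def using L2_set_triangle_ineq[of "\<lambda>i. x i - y i" "\<lambda>i. y i - z i"] by simp

lemma eucl_comm: "eucl_dist k x y = eucl_dist k y x"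
proof -
  have "L2_set (\<lambda>l. - g l) A = L2_set g A" for g :: "nat \<Rightarrow> real" and A
    by (simp add: L2_set_def)
  from this[of "\<lambda>i. x i - y i"] show ?thesis unfolding eucl_dist_def by simp
qed

lemma eucl_coord: "i < k \<Longrightarrow> \<bar>x i - y i\<bar> \<le> eucl_dist k x y"
  unfolding eucl_dist_def using member_le_L2_set[of "{..<k}" i "\<lambda>i. \<bar>x i - y i\<bar>"]
  by (simp add: L2_set_def)

lemma eucl_mono: "(\<And>l. l < k \<Longrightarrow> \<bar>u l - v l\<bar> \<le> \<bar>x l - y l\<bar>) \<Longrightarrow> eucl_dist k u v \<le> eucl_dist k x y"
proof -
  assume a: "\<And>l. l < k \<Longrightarrow> \<bar>u l - v l\<bar> \<le> \<bar>x l - y l\<bar>"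
  have "L2_set (\<lambda>l. \<bar>u l - v l\<bar>) {..<k} \<le> L2_set (\<lambda>l. \<bar>x l - y l\<bar>) {..<k}"
    by (rule L2_set_mono) (auto simp: a)
  then show ?thesis unfolding eucl_dist_def by (simp add: L2_set_def)
qed

lemma eucl_upd: "eucl_dist k x (x(j := t)) \<le> \<bar>x j - t\<bar>"
proof -
  have "eucl_dist k x (x(j := t)) \<le> (\<Sum>l<k. \<bar>x l - (x(j:=t)) l\<bar>)"
    unfolding eucl_dist_def by (rule L2_set_le_sum_abs)
  also have "\<dots> = (\<Sum>l<k. if l = j then \<bar>x j - t\<bar> else 0)"
    by (rule sum.cong) auto
  also have "\<dots> \<le> \<bar>x j - t\<bar>" by simp
  finally show ?thesis .
qed

definition segOK :: "nat \<Rightarrow> real \<Rightarrow> (nat \<Rightarrow> real) \<Rightarrow> (nat \<Rightarrow> real) \<Rightarrow> bool" where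
  "segOK k R u v \<longleftrightarrow> (\<exists>l<k. (u l > R \<and> v l > R) \<or> (u l < - R \<and> v l < - R))"

lemma convex_gt:
  fixes a b s R :: real
  assumes "a > R" "b > R" "0 \<le> s" "s \<le> 1"
  shows "a + s * (b - a) > R"
proof -
  have "a + s * (b - a) = (1 - s) * a + s * b" by (simp add: algebra_simps)
  also have "\<dots> \<ge> (1 - s) * min a b + s * min a b"
    using assms by (intro add_mono mult_left_mono) auto
  finally show ?thesis using assms by (simp add: algebra_simps)
qed

lemma convex_lt:
  fixes a b s R :: real
  assumes "a < R" "b < R" "0 \<le> s" "s \<le> 1"
  shows "a + s * (b - a) < R"
  using convex_gt[of "-R" "-a" "-b" s] assms by (simp add: algebra_simps)

lemma lin_ok:
  assumes "u \<in> topspace (Euclidean_space k)" "v \<in> topspace (Euclidean_space k)"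
    "segOK k R u v" "s \<in> {0..1}"
  shows "lin u v s \<in> topspace (Euclidean_space k)" and "\<exists>l<k. \<bar>lin u v s l\<bar> > R"
proof -
  show "lin u v s \<in> topspace (Euclidean_space k)"
    using assms(1,2) by (auto simp: topspace_Euclidean_space lin_def)
  from assms(3) obtain l where l: "l < k" "(u l > R \<and> v l > R) \<or> (u l < - R \<and> v l < - R)"
    unfolding segOK_def by blast
  from l(2) have "\<bar>lin u v s l\<bar> > R"
  proof
    assume "u l > R \<and> v l > R"
    then have "lin u v s l > R" using assms(4) convex_gt[of R "u l" "v l" s] by (auto simp: lin_def)
    then show ?thesis by linarith
  next
    assume "u l < - R \<and> v l < - R"
    then have "lin u v s l < - R" using assms(4) convex_lt[of "u l" "-R" "v l" s] by (auto simp: lin_def)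
    then show ?thesis by linarith
  qed
  then show "\<exists>l<k. \<bar>lin u v s l\<bar> > R" using l by blast
qed

lemma lin_0 [simp]: "lin u v 0 = u" and lin_1 [simp]: "lin u v 1 = v"
  by (auto simp: lin_def)

theorem mainTheorem2:
  fixes X :: "'a::euclidean_space set"
  assumes "closed X" and "\<not> bounded X" and "lipschitz_regular_at_infinity X"
  shows "\<exists>K. compact K \<and> (\<forall>C\<in>components (X - K). LNE C)"
proof -
  obtain k K1 K2 f g L1 L2 where
    cK1: "compactin (Euclidean_space k) K1" and cK2: "compact K2" and L1: "L1 > 0" and L2: "L2 > 0" and
    fim: "f ` (topspace (Euclidean_space k) - K1) = X - K2" and
    gim: "g ` (X - K2) = topspace (Euclidean_space k) - K1" and
    gf: "\<forall>x\<in>topspace (Euclidean_space k) - K1. g (f x) = x" and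
    fg: "\<forall>y\<in>X - K2. f (g y) = y" and
    fL: "\<forall>x\<in>topspace (Euclidean_space k) - K1. \<forall>x'\<in>topspace (Euclidean_space k) - K1.
          dist (f x) (f x') \<le> L1 * eucl_dist k x x'" and
    gL: "\<forall>y\<in>X - K2. \<forall>y'\<in>X - K2. eucl_dist k (g y) (g y') \<le> L2 * dist y y'"
    using assms(3) unfolding lipschitz_regular_at_infinity_def by (elim exE conjE) blast
  define D where "D = topspace (Euclidean_space k)"
  have bnd: "\<exists>b. \<forall>z\<in>K1. \<bar>z i\<bar> \<le> b" for i
  proof -
    have "compactin (powertop_real UNIV) K1"
      using cK1 by (simp add: Euclidean_space_def compactin_subtopology)
    then have "compactin euclideanreal ((\<lambda>x. x i) ` K1)"
      by (rule image_compactin) (metis UNIV_I continuous_map_product_coordinates)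
    then have "bounded ((\<lambda>x. x i) ` K1)" by (simp add: compact_imp_bounded)
    then show ?thesis unfolding bounded_iff by auto
  qed
  have "\<forall>i. \<exists>b. \<forall>z\<in>K1. \<bar>z i\<bar> \<le> b" using bnd by blast
  from choice[OF this] obtain b where b0: "\<forall>i. \<forall>z\<in>K1. \<bar>z i\<bar> \<le> b i" by blast
  have b: "\<bar>z i\<bar> \<le> b i" if "z \<in> K1" for i z using b0 that by blast
  define R where "R = 1 + (\<Sum>i<k. \<bar>b i\<bar>)"
  have R1: "R \<ge> 1" unfolding R_def by (simp add: sum_nonneg)
  have K1R: "\<bar>z i\<bar> \<le> R" if "z \<in> K1" "i < k" for z i
  proof -
    have "\<bar>b i\<bar> \<le> (\<Sum>i<k. \<bar>b i\<bar>)"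
      using that by (intro member_le_sum) auto
    then show ?thesis using b[OF that(1), of i] unfolding R_def by linarith
  qed
  define B where "B = {z \<in> D. \<forall>i<k. \<bar>z i\<bar> \<le> R}"
  have K1D: "K1 \<subseteq> D" using compactin_subset_topspace[OF cK1] by (simp add: D_def)
  have K1B: "K1 \<subseteq> B" using K1D K1R unfolding B_def by auto
  define K where "K = closure (K2 \<union> f ` (B - K1))"
  have "bounded (f ` (B - K1))"
  proof (cases "B - K1 = {}")
    case True then show ?thesis by (metis bounded_empty image_empty)
  next
    case False
    then obtain z0 where z0: "z0 \<in> B - K1" by blast
    have "f ` (B - K1) \<subseteq> cball (f z0) (L1 * (\<Sum>l<k. 2 * R))"
    proof
      fix y assume "y \<in> f ` (B - K1)"
      then obtain z where z: "z \<in> B - K1" "y = f z" by blast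
      have zz: "z \<in> topspace (Euclidean_space k) - K1" "z0 \<in> topspace (Euclidean_space k) - K1"
        using z z0 unfolding B_def D_def by auto
      have d1: "dist (f z0) (f z) \<le> L1 * eucl_dist k z0 z"
        using fL zz by blast
      have d2: "eucl_dist k z0 z \<le> (\<Sum>l<k. \<bar>z0 l - z l\<bar>)"
        unfolding eucl_dist_def by (rule L2_set_le_sum_abs)
      have d3: "(\<Sum>l<k. \<bar>z0 l - z l\<bar>) \<le> (\<Sum>l<k. 2 * R)"
      proof (rule sum_mono)
        fix l assume "l \<in> {..<k}"
        then show "\<bar>z0 l - z l\<bar> \<le> 2 * R" using z z0 unfolding B_def by fastforce
      qed
      have "L1 * eucl_dist k z0 z \<le> L1 * (\<Sum>l<k. 2 * R)"
        using d2 d3 L1 by (intro mult_left_mono) auto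
      then show "y \<in> cball (f z0) (L1 * (\<Sum>l<k. 2 * R))"
        using z d1 by simp
    qed
    then show ?thesis using bounded_subset bounded_cball by blast
  qed
  then have cK: "compact K" unfolding K_def
    using cK2 compact_imp_bounded by (auto intro!: compact_closure[THEN iffD2])
  have out: "f w \<in> X - K" if w: "w \<in> D - B" for w
  proof -
    have wK1: "w \<in> D - K1" using w K1B by auto
    then have fw: "f w \<in> X - K2" using fim D_def by blast
    from w obtain i where i: "i < k" "\<bar>w i\<bar> > R" unfolding B_def by auto
    have "open (- K2)" using cK2 compact_imp_closed by blast
    then obtain e1 where e1: "e1 > 0" "ball (f w) e1 \<subseteq> - K2"
      using fw open_contains_ball by blast
    define e where "e = min e1 ((\<bar>w i\<bar> - R) / L2)"
    have e: "e > 0" using e1 i L2 by (simp add: e_def)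
    show ?thesis
    proof
      show "f w \<notin> K"
      proof
        assume "f w \<in> K"
        then obtain y where y: "y \<in> K2 \<union> f ` (B - K1)" "dist y (f w) < e"
          using e unfolding K_def closure_approachable by blast
        have "y \<in> ball (f w) e1" using y e_def by (simp add: dist_commute)
        then have "y \<notin> K2" using e1 by auto
        then obtain z where z: "z \<in> B - K1" "y = f z" using y by blast
        have zD: "z \<in> D - K1" using z unfolding B_def by auto
        have fz: "f z \<in> X - K2" using zD fim D_def by blast
        have "eucl_dist k (g (f z)) (g (f w)) \<le> L2 * dist (f z) (f w)"
          using gL fz fw by blast
        then have "eucl_dist k z w \<le> L2 * dist (f z) (f w)"
          using gf zD wK1 D_def by auto
        moreover have "\<bar>z i - w i\<bar> \<le> eucl_dist k z w" using i(1) by (rule eucl_coord)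
        moreover have "\<bar>z i\<bar> \<le> R" using z i unfolding B_def by auto
        moreover have "L2 * dist (f z) (f w) < L2 * e" using y z L2 by simp
        moreover have "L2 * e \<le> \<bar>w i\<bar> - R" using L2 unfolding e_def
          by (simp add: min_def field_simps)
        ultimately show False using i by linarith
      qed
    qed (use fw in auto)
  qed
  have bck: "g p \<in> D - B \<and> f (g p) = p" if p: "p \<in> X - K" for p
  proof -
    have "K2 \<subseteq> K" unfolding K_def using closure_subset by blast
    then have pK2: "p \<in> X - K2" using p by auto
    then have gp: "g p \<in> D - K1" using gim D_def by blast
    have fgp: "f (g p) = p" using fg pK2 by blast
    have "g p \<notin> B"
    proof
      assume "g p \<in> B"
      then have "g p \<in> B - K1" using gp by blast
      then have "f (g p) \<in> f ` (B - K1)" by (rule imageI)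
      then have "p \<in> f ` (B - K1)" using fgp by simp
      then have "p \<in> K" unfolding K_def using closure_subset[of "K2 \<union> f ` (B - K1)"] by blast
      then show False using p by blast
    qed
    then show ?thesis using gp fgp by blast
  qed
  have wit: "\<exists>l<k. \<bar>z l\<bar> > R" if "z \<in> D - B" for z
  proof -
    have "\<not> (\<forall>i<k. \<bar>z i\<bar> \<le> R)" using that unfolding B_def by blast
    then show ?thesis by (auto simp: not_le)
  qed
  show ?thesis
  proof (intro exI conjI ballI)
    show "compact K" by (rule cK)
    fix C assume C: "C \<in> components (X - K)"
    have CXK: "C \<subseteq> X - K" using C by (rule in_components_subset)
    have key: "inner_dist C p q \<le> ereal ((6 * L1 * L2 + 1) * norm (p - q))"
      if pC: "p \<in> C" and qC: "q \<in> C" for p q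
    proof -
      define x where "x = g p"
      define y where "y = g q"
      have px: "x \<in> D - B" "f x = p" using bck pC CXK x_def by auto
      have qy: "y \<in> D - B" "f y = q" using bck qC CXK y_def by auto
      define E where "E = eucl_dist k x y"
      have K2K: "K2 \<subseteq> K" unfolding K_def using closure_subset by blast
      have pK2: "p \<in> X - K2" "q \<in> X - K2" using pC qC CXK K2K by blast+
      have EL: "E \<le> L2 * norm (p - q)"
        using gL pK2 unfolding E_def x_def y_def by (simp add: dist_norm)
      have E0: "E \<ge> 0" unfolding E_def eucl_dist_def by simp
      have seg_in: "lin u v s \<in> D - B" if a: "u \<in> D" "v \<in> D" "segOK k R u v" "s \<in> {0..1}" for u v s
      proof -
        have uD: "u \<in> topspace (Euclidean_space k)" "v \<in> topspace (Euclidean_space k)"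
          using a(1,2) by (simp_all add: D_def)
        obtain l where l: "l < k" "\<bar>lin u v s l\<bar> > R" using lin_ok(2)[OF uD a(3,4)] by blast
        have inD: "lin u v s \<in> D" using lin_ok(1)[OF uD a(3,4)] by (simp add: D_def)
        have "\<not> (\<forall>i<k. \<bar>lin u v s i\<bar> \<le> R)" using l not_le by blast
        then show ?thesis using inD unfolding B_def by blast
      qed
      have pathlem: "inner_dist C p q \<le> ereal (6 * L1 * E)"
        if x1D: "x1 \<in> D" and y1D: "y1 \<in> D" and s1: "segOK k R x x1" and s2: "segOK k R x1 y1"
          and s3: "segOK k R y1 y" and d1: "eucl_dist k x x1 \<le> 2 * E"
          and d2: "eucl_dist k x1 y1 \<le> 2 * E" and d3: "eucl_dist k y1 y \<le> 2 * E" for x1 y1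
      proof -
        define \<delta> where "\<delta> t = (if t \<le> 1/3 then lin x x1 (3*t) else if t \<le> 2/3 then lin x1 y1 (3*t - 1)
            else lin y1 y (3*t - 2))" for t
        have xD: "x \<in> D" "y \<in> D" using px qy by auto
        have dl1: "\<delta> t = lin x x1 (3*t)" if "t \<in> {0..1/3}" for t using that \<delta>_def by auto
        have dl2: "\<delta> t = lin x1 y1 (3*t - 1)" if "t \<in> {1/3..2/3}" for t
        proof (cases "t \<le> 1/3")
          case True then have "t = 1/3" using that by auto
          moreover have "\<delta> (1/3) = lin x1 y1 (3*(1/3) - 1)" by (simp add: \<delta>_def)
          ultimately show ?thesis by (simp only:)
        qed (use that \<delta>_def in auto)
        have dl3: "\<delta> t = lin y1 y (3*t - 2)" if "t \<in> {2/3..1}" for t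
        proof (cases "t \<le> 2/3")
          case True then have "t = 2/3" using that by auto
          moreover have "\<delta> (2/3) = lin y1 y (3*(2/3) - 2)" by (simp add: \<delta>_def)
          ultimately show ?thesis by (simp only:)
        qed (use that \<delta>_def in auto)
        have dD: "\<delta> t \<in> D - B" if "t \<in> {0..1}" for t
        proof (cases "t \<le> 1/3")
          case True
          then have t1: "t \<in> {0..1/3}" "3*t \<in> {0..1}" using that by auto
          show ?thesis using seg_in[OF xD(1) x1D s1 t1(2)] dl1[OF t1(1)] by simp
        next
          case False
          show ?thesis
          proof (cases "t \<le> 2/3")
            case True
            then have t1: "t \<in> {1/3..2/3}" "3*t-1 \<in> {0..1}" using that False by auto
            show ?thesis using seg_in[OF x1D y1D s2 t1(2)] dl2[OF t1(1)] by simp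
          next
            case F2: False
            then have t1: "t \<in> {2/3..1}" "3*t-2 \<in> {0..1}" using that by auto
            show ?thesis using seg_in[OF y1D xD(2) s3 t1(2)] dl3[OF t1(1)] by simp
          qed
        qed
        define \<gamma> where "\<gamma> = f \<circ> \<delta>"
        define M where "M = 6 * L1 * E"
        have M0: "M \<ge> 0" using L1 E0 by (simp add: M_def)
        have fdist: "dist (f u) (f v) \<le> L1 * eucl_dist k u v" if "u \<in> D - B" "v \<in> D - B" for u v
          using fL that K1B unfolding D_def by blast
        have piece: "dist (\<gamma> s) (\<gamma> t) \<le> M * \<bar>s - t\<bar>"
          if "s \<in> {a..a+1/3}" "t \<in> {a..a+1/3}" "\<And>t. t \<in> {a..a+1/3} \<Longrightarrow> \<delta> t = lin u v (3*t - 3*a)"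
             "eucl_dist k u v \<le> 2 * E" "{a..a+1/3} \<subseteq> {0..1}" for s t a u v
        proof -
          have sD: "\<delta> s \<in> D - B" using dD that(1,5) by blast
          have tD: "\<delta> t \<in> D - B" using dD that(2,5) by blast
          have "dist (\<gamma> s) (\<gamma> t) \<le> L1 * eucl_dist k (\<delta> s) (\<delta> t)"
            unfolding \<gamma>_def comp_def by (rule fdist[OF sD tD])
          also have "eucl_dist k (\<delta> s) (\<delta> t) = \<bar>(3 * s - 3*a) - (3*t - 3*a)\<bar> * eucl_dist k u v"
            unfolding that(3)[OF that(1)] that(3)[OF that(2)] by (rule eucl_lin)
          also have "\<dots> = 3 * \<bar>s - t\<bar> * eucl_dist k u v" by (simp add: abs_if algebra_simps)
          also have "L1 * (3 * \<bar>s - t\<bar> * eucl_dist k u v) \<le> L1 * (3 * \<bar>s - t\<bar> * (2 * E))"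
            using that(4) L1 by (intro mult_left_mono) auto
          also have "\<dots> = M * \<bar>s - t\<bar>" by (simp add: M_def)
          finally show ?thesis .
        qed
        have P1: "dist (\<gamma> s) (\<gamma> t) \<le> M * \<bar>s - t\<bar>" if "s \<in> {0..1/3}" "t \<in> {0..1/3}" for s t
          by (rule piece[of s 0 t x x1]) (use that dl1 d1 in auto)
        have P2: "dist (\<gamma> s) (\<gamma> t) \<le> M * \<bar>s - t\<bar>" if "s \<in> {1/3..2/3}" "t \<in> {1/3..2/3}" for s t
          by (rule piece[of s "1/3" t x1 y1]) (use that dl2 d2 in auto)
        have P3: "dist (\<gamma> s) (\<gamma> t) \<le> M * \<bar>s - t\<bar>" if "s \<in> {2/3..1}" "t \<in> {2/3..1}" for s t
          by (rule piece[of s "2/3" t y1 y]) (use that dl3 d3 in auto)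
        have P12: "dist (\<gamma> s) (\<gamma> t) \<le> M * \<bar>s - t\<bar>" if "s \<in> {0..2/3}" "t \<in> {0..2/3}" for s t
          by (rule lip_glue[of 0 "1/3" "2/3" \<gamma> M, OF _ _ P1 P2 that]) auto
        have Lg: "dist (\<gamma> s) (\<gamma> t) \<le> M * \<bar>s - t\<bar>" if "s \<in> {0..1}" "t \<in> {0..1}" for s t
          by (rule lip_glue[of 0 "2/3" 1 \<gamma> M, OF _ _ P12 P3 that]) auto
        have pg: "path \<gamma>" by (rule path_of_lip[OF M0 Lg])
        have g0: "\<gamma> 0 = p" using px by (simp add: \<gamma>_def \<delta>_def)
        have g1: "\<gamma> 1 = q" using qy by (simp add: \<gamma>_def \<delta>_def)
        have imXK: "path_image \<gamma> \<subseteq> X - K"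
        proof
          fix z assume "z \<in> path_image \<gamma>"
          then obtain t where t: "t \<in> {0..1}" "z = f (\<delta> t)" unfolding path_image_def \<gamma>_def by auto
          show "z \<in> X - K" unfolding t(2) by (rule out[OF dD[OF t(1)]])
        qed
        have "path_image \<gamma> \<subseteq> C"
        proof (rule components_maximal[OF C])
          show "connected (path_image \<gamma>)" using pg by (rule connected_path_image)
          show "C \<inter> path_image \<gamma> \<noteq> {}" using pC g0 pathstart_in_path_image[of \<gamma>]
            unfolding pathstart_def by blast
        qed (rule imXK)
        then have "inner_dist C p q \<le> path_length \<gamma>"
          unfolding inner_dist_def using pg g0 g1 by (intro INF_lower) (auto simp: pathstart_def pathfinish_def)
        also have "\<dots> \<le> ereal M" by (rule path_length_le[OF M0 Lg])
        finally show ?thesis by (simp add: M_def)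
      qed
      have main: "inner_dist C p q \<le> ereal (6 * L1 * E)"
      proof -
        obtain ix where ix: "ix < k" "\<bar>x ix\<bar> > R" using wit px by blast
        obtain iy where iy: "iy < k" "\<bar>y iy\<bar> > R" using wit qy by blast
        have xD: "x \<in> D" "y \<in> D" using px qy by auto
        have sxx: "segOK k R x x" using ix unfolding segOK_def by (intro exI[of _ ix]) auto
        have syy: "segOK k R y y" using iy unfolding segOK_def by (intro exI[of _ iy]) auto
        have e0: "eucl_dist k u u = 0" for u unfolding eucl_dist_def by (simp add: L2_set_def)
        show ?thesis
        proof (cases "segOK k R x y")
          case True
          show ?thesis by (rule pathlem[OF xD(1) xD(2) sxx True syy]) (use E0 in \<open>auto simp: e0 E_def[symmetric]\<close>)
        next
          case nc1: False
          show ?thesis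
          proof (cases "\<exists>i j. i < k \<and> j < k \<and> i \<noteq> j \<and> \<bar>x i\<bar> > R \<and> \<bar>y j\<bar> > R")
            case True
            then obtain i j where ij: "i < k" "j < k" "i \<noteq> j" "\<bar>x i\<bar> > R" "\<bar>y j\<bar> > R" by blast
            define x1 where "x1 = x(j := y j)"
            have x1D: "x1 \<in> D" using xD ij unfolding x1_def D_def topspace_Euclidean_space by auto
            have s1: "segOK k R x x1" using ij unfolding segOK_def x1_def by (intro exI[of _ i]) auto
            have s2: "segOK k R x1 y" using ij unfolding segOK_def x1_def by (intro exI[of _ j]) auto
            have d1: "eucl_dist k x x1 \<le> 2 * E"
              using eucl_upd[of k x j "y j"] eucl_coord[OF ij(2), of x y] E0 unfolding x1_def E_def by linarith
            have "eucl_dist k x1 y \<le> E"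
              unfolding E_def
            proof (rule eucl_mono)
              fix l assume "l < k"
              show "\<bar>x1 l - y l\<bar> \<le> \<bar>x l - y l\<bar>" by (cases "l = j") (simp_all add: x1_def)
            qed
            then have d2: "eucl_dist k x1 y \<le> 2 * E" using E0 by linarith
            show ?thesis by (rule pathlem[OF x1D xD(2) s1 s2 syy d1 d2]) (use E0 in \<open>auto simp: e0\<close>)
          next
            case nc2: False
            have iyx: "iy = ix" using nc2 ix iy by blast
            have xonly: "\<bar>x l\<bar> \<le> R" if "l < k" "l \<noteq> ix" for l
            proof (rule ccontr)
              assume "\<not> \<bar>x l\<bar> \<le> R"
              then have "\<bar>x l\<bar> > R" by simp
              moreover have "l \<noteq> iy" using that iyx by simp
              ultimately show False using nc2 that(1) iy by blast
            qed
            have yonly: "\<bar>y l\<bar> \<le> R" if "l < k" "l \<noteq> ix" for l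
            proof (rule ccontr)
              assume "\<not> \<bar>y l\<bar> \<le> R"
              then have "\<bar>y l\<bar> > R" by simp
              moreover have "ix \<noteq> l" using that by simp
              ultimately show False using nc2 that(1) ix by blast
            qed
            have ns: "\<not> ((x ix > R \<and> y ix > R) \<or> (x ix < - R \<and> y ix < - R))"
              using nc1 ix(1) unfolding segOK_def by blast
            have opp: "\<bar>x ix - y ix\<bar> > 2 * R"
              using ns ix(2) iy(2) iyx by (smt (verit))
            have E2R: "E > 2 * R" using opp eucl_coord[OF ix(1), of x y] unfolding E_def by linarith
            show ?thesis
            proof (cases "\<exists>j<k. j \<noteq> ix")
              case True
              then obtain j where j: "j < k" "j \<noteq> ix" by blast
              define x1 where "x1 = x(j := 2 * R)"
              define y1 where "y1 = y(j := 2 * R)"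
              have x1D: "x1 \<in> D" "y1 \<in> D" using xD j unfolding x1_def y1_def D_def topspace_Euclidean_space by auto
              have s1: "segOK k R x x1" using ix j unfolding segOK_def x1_def by (intro exI[of _ ix]) auto
              have s2: "segOK k R x1 y1" using j R1 unfolding segOK_def x1_def y1_def by (intro exI[of _ j]) auto
              have s3: "segOK k R y1 y" using iy iyx j unfolding segOK_def y1_def by (intro exI[of _ ix]) auto
              have d1: "eucl_dist k x x1 \<le> 2 * E"
                using eucl_upd[of k x j "2 * R"] xonly[OF j] E2R unfolding x1_def by linarith
              have d3: "eucl_dist k y1 y \<le> 2 * E"
                using eucl_upd[of k y j "2 * R"] yonly[OF j] E2R eucl_comm[of k y1 y] unfolding y1_def by linarith
              have "eucl_dist k x1 y1 \<le> E"
                unfolding E_def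
              proof (rule eucl_mono)
                fix l assume "l < k"
                show "\<bar>x1 l - y1 l\<bar> \<le> \<bar>x l - y l\<bar>" by (cases "l = j") (simp_all add: x1_def y1_def)
              qed
              then have d2: "eucl_dist k x1 y1 \<le> 2 * E" using E0 by linarith
              show ?thesis by (rule pathlem[OF x1D s1 s2 s3 d1 d2 d3])
            next
              case False
              define \<phi> where "\<phi> r = g r ix" for r
              have XK: "X - K \<subseteq> X - K2" using closure_subset unfolding K_def by blast
              have "continuous_on (X - K) \<phi>"
              proof (rule lipschitz_on_continuous_on[of L2])
                show "L2-lipschitz_on (X - K) \<phi>"
                  unfolding lipschitz_on_def
                proof (intro conjI ballI)
                  fix r r' assume "r \<in> X - K" "r' \<in> X - K"
                  then have "eucl_dist k (g r) (g r') \<le> L2 * dist r r'" using gL XK by blast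
                  then show "dist (\<phi> r) (\<phi> r') \<le> L2 * dist r r'"
                    using eucl_coord[OF ix(1), of "g r" "g r'"] by (simp add: \<phi>_def dist_real_def)
                qed (use L2 in auto)
              qed
              then have "continuous_on C \<phi>" using CXK continuous_on_subset by blast
              then have cphi: "connected (\<phi> ` C)"
                using in_components_connected[OF C] connected_continuous_image by blast
              have "\<phi> p \<in> \<phi> ` C" "\<phi> q \<in> \<phi> ` C" using pC qC by auto
              moreover have "\<phi> p = x ix" "\<phi> q = y ix" by (simp_all add: \<phi>_def x_def y_def)
              moreover have "min (x ix) (y ix) \<le> 0 \<and> 0 \<le> max (x ix) (y ix)"
                using ns ix(2) iy(2) iyx by (smt (verit))
              ultimately have "0 \<in> \<phi> ` C"
                using connected_contains_Icc[OF cphi, of "x ix" "y ix"]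
                  connected_contains_Icc[OF cphi, of "y ix" "x ix"]
                by (cases "x ix \<le> y ix") (auto simp: min_def max_def)
              then obtain r where r: "r \<in> C" "g r ix = 0" unfolding \<phi>_def by auto
              have "g r \<in> D - B" using bck r CXK by blast
              then obtain l where "l < k" "\<bar>g r l\<bar> > R" using wit by blast
              then have "l = ix" using False by blast
              then show ?thesis using r R1 \<open>\<bar>g r l\<bar> > R\<close> by simp
            qed
          qed
        qed
      qed
      also have "ereal (6 * L1 * E) \<le> ereal ((6 * L1 * L2 + 1) * norm (p - q))"
      proof -
        have "6 * L1 * E \<le> 6 * L1 * (L2 * norm (p - q))" using EL L1 by simp
        also have "\<dots> \<le> (6 * L1 * L2 + 1) * norm (p - q)" by (simp add: algebra_simps)
        finally show ?thesis by simp
      qed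
      finally show ?thesis .
    qed
    show "LNE C" unfolding LNE_def
      by (rule exI[of _ "6 * L1 * L2 + 1"]) (use L1 L2 key in \<open>auto intro: add_pos_nonneg\<close>)
  qed
qed

end
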